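(* Let $0\le q\in L_1^{loc}(\mathbb{R})$ and assume there is $a\in(0,\infty)$ with $\inf_{x\in\mathbb{R}}\int_{x-a}^{x+a}q(t)\,dt>0$. Suppose $q=q_1+q_2$ on $\mathbb{R}$ with $q_1>0$ continuous and $q_2\in L_1^{loc}(\mathbb{R})$, and that $\sigma_1(x)\to0$, $\sigma_2(x)\to0$ as $|x|\to\infty$, where $$\sigma_1(x)=\sup_{|z|\le2/q_1(x)}\Big|\int_0^z\big[q_1(x+t)-2q_1(x)+q_1(x-t)\big]dt\Big|,\qquad \sigma_2(x)=\sup_{|z|\le2/q_1(x)}\Big|\int_{x-z}^{x+z}q_2(t)\,dt\Big|.$$ If moreover $q_1(x)\to\infty$ as $|x|\to\infty$, then for every $p\in(1,\infty]$ the solutions of $-y'+qy=f$ tend in whole to zero as $|x|\to\infty$.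
   Context: $L_\infty(\mathbb{R})$ denotes $C(\mathbb{R})$ with the sup norm. $D_p$ is the set of all solutions $y\in L_p(\mathbb{R})$ of $-y'(x)+q(x)y(x)=f(x)$, $x\in\mathbb{R}$, with $f\in L_p(\mathbb{R})$, $\|f\|_p=1$. The solutions tend in whole to zero as $|x|\to\infty$ if for every $\varepsilon>0$ there is $x_0(\varepsilon)$ such that $|y(x)|\le\varepsilon$ for all $y\in D_p$ and all $|x|\ge x_0(\varepsilon)$. *)

theory Defs
  imports "HOL-Analysis.Analysis"
begin

definition loc_int :: "(real \<Rightarrow> real) \<Rightarrow> bool" where
  "loc_int g \<longleftrightarrow> (\<forall>a b. set_integrable lborel {a..b} g)"

text \<open>Membership in L_p for p in (1,infinity); for p = infinity, L_infinity denotes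
  the space C(R) of bounded continuous functions with the sup norm.\<close>
definition in_Lp :: "ereal \<Rightarrow> (real \<Rightarrow> real) \<Rightarrow> bool" where
  "in_Lp p g \<longleftrightarrow>
     (if p = \<infinity> then continuous_on UNIV g \<and> bounded (range g)
      else g \<in> borel_measurable lborel \<and>
           integrable lborel (\<lambda>x. \<bar>g x\<bar> powr real_of_ereal p))"

definition Lp_norm :: "ereal \<Rightarrow> (real \<Rightarrow> real) \<Rightarrow> real" where
  "Lp_norm p g =
     (if p = \<infinity> then (SUP x. \<bar>g x\<bar>)
      else (LINT x|lborel. \<bar>g x\<bar> powr real_of_ereal p) powr (1 / real_of_ereal p))"

text \<open>y is a (locally absolutely continuous) solution of -y' + q y = f on R,
  i.e. y' = q y - f almost everywhere.\<close>
definition is_solution :: "(real \<Rightarrow> real) \<Rightarrow> (real \<Rightarrow> real) \<Rightarrow> (real \<Rightarrow> real) \<Rightarrow> bool" where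
  "is_solution q f y \<longleftrightarrow>
     loc_int (\<lambda>t. q t * y t - f t) \<and>
     (\<forall>a b. a \<le> b \<longrightarrow> y b - y a = (LBINT t:{a..b}. q t * y t - f t))"

definition D_set :: "ereal \<Rightarrow> (real \<Rightarrow> real) \<Rightarrow> (real \<Rightarrow> real) set" where
  "D_set p q = {y. in_Lp p y \<and> (\<exists>f. in_Lp p f \<and> Lp_norm p f = 1 \<and> is_solution q f y)}"

definition tend_in_whole_to_zero :: "ereal \<Rightarrow> (real \<Rightarrow> real) \<Rightarrow> bool" where
  "tend_in_whole_to_zero p q \<longleftrightarrow>
     (\<forall>\<epsilon>>0. \<exists>x0. \<forall>y\<in>D_set p q. \<forall>x. \<bar>x\<bar> \<ge> x0 \<longrightarrow> \<bar>y x\<bar> \<le> \<epsilon>)"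

definition sigma1 :: "(real \<Rightarrow> real) \<Rightarrow> real \<Rightarrow> real" where
  "sigma1 q1 x = (SUP z\<in>{z. \<bar>z\<bar> \<le> 2 / q1 x}.
      \<bar>LBINT t=ereal 0..ereal z. q1 (x + t) - 2 * q1 x + q1 (x - t)\<bar>)"

definition sigma2 :: "(real \<Rightarrow> real) \<Rightarrow> (real \<Rightarrow> real) \<Rightarrow> real \<Rightarrow> real" where
  "sigma2 q1 q2 x = (SUP z\<in>{z. \<bar>z\<bar> \<le> 2 / q1 x}.
      \<bar>LBINT t=ereal (x - z)..ereal (x + z). q2 t\<bar>)"

end

theory Submission
  imports Defs
begin

lemma si_hk:
  fixes g :: "real \<Rightarrow> real"
  assumes "set_integrable lborel {a..b} g"
  shows "g integrable_on {a..b}" "(\<lambda>t. \<bar>g t\<bar>) integrable_on {a..b}"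
    "(LBINT t:{a..b}. g t) = integral {a..b} g"
  using set_borel_integral_eq_integral[OF assms] set_borel_integral_eq_integral[OF set_integrable_abs[OF assms]]
  by auto

lemma abs_ivl_bound_le:
  fixes g :: "real \<Rightarrow> real"
  assumes "set_integrable lborel {c..d} g" "a \<in> {c..d}" "b \<in> {c..d}" "a \<le> b"
  shows "\<bar>LBINT t=ereal a..ereal b. g t\<bar> \<le> integral {c..d} (\<lambda>t. \<bar>g t\<bar>)"
proof -
  have sub: "set_integrable lborel {a..b} g"
    by (rule set_integrable_subset[OF assms(1)]) (use assms in auto)
  have "(LBINT t=ereal a..ereal b. g t) = integral {a..b} g"
    using interval_integral_eq_integral[OF assms(4) sub] by simp
  also have "\<bar>\<dots>\<bar> \<le> integral {a..b} (\<lambda>t. \<bar>g t\<bar>)"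
    using integral_norm_bound_integral[OF si_hk(1)[OF sub] si_hk(2)[OF sub]] by auto
  also have "\<dots> \<le> integral {c..d} (\<lambda>t. \<bar>g t\<bar>)"
    by (rule integral_subset_le) (use assms si_hk[OF sub] si_hk[OF assms(1)] in auto)
  finally show ?thesis .
qed

lemma abs_ivl_bound:
  fixes g :: "real \<Rightarrow> real"
  assumes "set_integrable lborel {c..d} g" "a \<in> {c..d}" "b \<in> {c..d}"
  shows "\<bar>LBINT t=ereal a..ereal b. g t\<bar> \<le> integral {c..d} (\<lambda>t. \<bar>g t\<bar>)"
proof (cases "a \<le> b")
  case True thus ?thesis using abs_ivl_bound_le assms by blast
next
  case False
  have "\<bar>LBINT t=ereal a..ereal b. g t\<bar> = \<bar>LBINT t=ereal b..ereal a. g t\<bar>"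
    by (subst interval_integral_endpoints_reverse) simp
  thus ?thesis using abs_ivl_bound_le[of c d g b a] assms False by auto
qed

lemma window:
  fixes q q1 q2 :: "real \<Rightarrow> real" and s :: real
  assumes q1_pos: "\<forall>x. q1 x > 0"
    and q1_cont: "continuous_on UNIV q1"
    and q2_loc: "loc_int q2"
    and q_loc: "loc_int q"
    and q_split: "AE x in lborel. q x = q1 x + q2 x"
    and s1: "sigma1 q1 s \<le> 1/4" and s2: "sigma2 q1 q2 s \<le> 1/4"
  shows "integral {s - 1 / q1 s .. s + 1 / q1 s} q \<ge> 1"
proof -
  define h where "h = 1 / q1 s"
  define H where "H = 2 / q1 s"
  have qs: "q1 s > 0" using q1_pos by auto
  have hpos: "h > 0" "h \<le> H" "0 \<le> H" using qs by (auto simp: h_def H_def divide_simps)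
  have hq: "h * q1 s = 1" using qs by (simp add: h_def)
  have cont1: "\<And>a b. continuous_on {a..b} q1" using q1_cont continuous_on_subset by blast
  have i1: "\<And>a b. q1 integrable_on {a..b}" using cont1 integrable_continuous_interval by blast
  have i2: "\<And>a b. q2 integrable_on {a..b}" using q2_loc si_hk(1) unfolding loc_int_def by metis
  from q_split obtain N where N: "{x \<in> space lborel. \<not> q x = q1 x + q2 x} \<subseteq> N" "N \<in> null_sets lborel"
    by (rule AE_E) (metis null_setsI)
  have negN: "negligible N"
    using N(2) by (simp add: negligible_iff_null_sets null_sets_completionI)
  have split: "integral {s-h..s+h} q = integral {s-h..s+h} q1 + integral {s-h..s+h} q2"
  proof -
    have "integral {s-h..s+h} q = integral {s-h..s+h} (\<lambda>x. q1 x + q2 x)"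
      by (rule integral_spike[OF negN]) (use N in force)
    also have "\<dots> = integral {s-h..s+h} q1 + integral {s-h..s+h} q2"
      by (rule integral_add[OF i1 i2])
    finally show ?thesis .
  qed
  have q2b: "\<bar>integral {s-h..s+h} q2\<bar> \<le> 1/4"
  proof -
    have si: "set_integrable lborel {s-H..s+H} q2" using q2_loc unfolding loc_int_def by blast
    have "(LBINT t=ereal (s-h)..ereal (s+h). q2 t) = integral {s-h..s+h} q2"
      by (rule interval_integral_eq_integral) (use hpos q2_loc loc_int_def in auto)
    moreover have "\<bar>LBINT t=ereal (s-h)..ereal (s+h). q2 t\<bar> \<le> sigma2 q1 q2 s"
      unfolding sigma2_def
    proof (rule cSUP_upper)
      show "h \<in> {z. \<bar>z\<bar> \<le> 2 / q1 s}" using hpos by (auto simp: H_def)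
      show "bdd_above ((\<lambda>z. \<bar>LBINT t=ereal (s-z)..ereal (s+z). q2 t\<bar>) ` {z. \<bar>z\<bar> \<le> 2 / q1 s})"
        unfolding bdd_above_def
      proof (rule exI[of _ "integral {s-H..s+H} (\<lambda>t. \<bar>q2 t\<bar>)"], intro ballI)
        fix w assume "w \<in> (\<lambda>z. \<bar>LBINT t=ereal (s-z)..ereal (s+z). q2 t\<bar>) ` {z. \<bar>z\<bar> \<le> 2 / q1 s}"
        then obtain z where z: "\<bar>z\<bar> \<le> H" "w = \<bar>LBINT t=ereal (s-z)..ereal (s+z). q2 t\<bar>"
          unfolding H_def by blast
        have "s - z \<in> {s-H..s+H}" "s + z \<in> {s-H..s+H}" using z(1) by (auto simp: abs_le_iff)
        thus "w \<le> integral {s-H..s+H} (\<lambda>t. \<bar>q2 t\<bar>)" using z(2) abs_ivl_bound[OF si] by blast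
      qed
    qed
    ultimately show ?thesis using s2 by simp
  qed
  define g where "g t = q1 (s + t) - 2 * q1 s + q1 (s - t)" for t
  have contg: "continuous_on UNIV g" unfolding g_def
    by (intro continuous_intros continuous_on_compose2[OF q1_cont]) auto
  have ig: "\<And>a b. set_integrable lborel {a..b} g"
    using contg borel_integrable_atLeastAtMost' continuous_on_subset by blast
  have gb: "\<bar>LBINT t=ereal 0..ereal h. g t\<bar> \<le> 1/4"
  proof -
    have "\<bar>LBINT t=ereal 0..ereal h. g t\<bar> \<le> sigma1 q1 s"
      unfolding sigma1_def g_def[symmetric]
    proof (rule cSUP_upper)
      show "h \<in> {z. \<bar>z\<bar> \<le> 2 / q1 s}" using hpos by (auto simp: H_def)
      show "bdd_above ((\<lambda>z. \<bar>LBINT t=ereal 0..ereal z. g t\<bar>) ` {z. \<bar>z\<bar> \<le> 2 / q1 s})"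
        unfolding bdd_above_def
      proof (rule exI[of _ "integral {-H..H} (\<lambda>t. \<bar>g t\<bar>)"], intro ballI)
        fix w assume "w \<in> (\<lambda>z. \<bar>LBINT t=ereal 0..ereal z. g t\<bar>) ` {z. \<bar>z\<bar> \<le> 2 / q1 s}"
        then obtain z where z: "\<bar>z\<bar> \<le> H" "w = \<bar>LBINT t=ereal 0..ereal z. g t\<bar>"
          unfolding H_def by blast
        have "0 \<in> {-H..H}" "z \<in> {-H..H}" using z(1) hpos by (auto simp: abs_le_iff)
        thus "w \<le> integral {-H..H} (\<lambda>t. \<bar>g t\<bar>)" using z(2) abs_ivl_bound[OF ig] by blast
      qed
    qed
    thus ?thesis using s1 by simp
  qed
  have "(LBINT t=ereal 0..ereal h. g t) = integral {0..h} g"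
    by (rule interval_integral_eq_integral) (use hpos ig in auto)
  also have "\<dots> = integral {0..h} (\<lambda>t. q1 (s + t)) - integral {0..h} (\<lambda>t. 2 * q1 s)
      + integral {0..h} (\<lambda>t. q1 (s - t))"
  proof -
    have c1: "continuous_on {0..h} (\<lambda>t. q1 (s + t))"
      by (intro continuous_on_compose2[OF q1_cont] continuous_intros) auto
    have c2: "continuous_on {0..h} (\<lambda>t. q1 (s - t))"
      by (intro continuous_on_compose2[OF q1_cont] continuous_intros) auto
    have A: "(\<lambda>t. q1 (s + t)) integrable_on {0..h}" using integrable_continuous_interval[OF c1] .
    have B: "(\<lambda>t. q1 (s - t)) integrable_on {0..h}" using integrable_continuous_interval[OF c2] .
    have C: "(\<lambda>t. 2 * q1 s) integrable_on {0..h}" by (rule integrable_continuous_interval) (rule continuous_on_const)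
    have "integral {0..h} g = integral {0..h} (\<lambda>t. (q1 (s + t) - 2 * q1 s) + q1 (s - t))"
      by (simp add: g_def[abs_def])
    also have "\<dots> = integral {0..h} (\<lambda>t. q1 (s + t) - 2 * q1 s) + integral {0..h} (\<lambda>t. q1 (s - t))"
      by (rule integral_add[OF integrable_diff[OF A C] B])
    also have "integral {0..h} (\<lambda>t. q1 (s + t) - 2 * q1 s) = integral {0..h} (\<lambda>t. q1 (s + t)) - integral {0..h} (\<lambda>t. 2 * q1 s)"
      by (rule integral_diff[OF A C])
    finally show ?thesis .
  qed
  also have "integral {0..h} (\<lambda>t. q1 (s + t)) = integral {s..s+h} q1"
    using integral_shift_Icc_real[of 0 h q1 s] by (simp add: o_def add.commute)
  also have "integral {0..h} (\<lambda>t. q1 (s - t)) = integral {s-h..s} q1"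
  proof -
    have "integral {0..h} (\<lambda>t. q1 (s - t)) = integral {-h..-0} (\<lambda>x. q1 (s - - x))"
      using Henstock_Kurzweil_Integration.integral_reflect_real[of h 0 "\<lambda>t. q1 (s - t)"] by simp
    also have "\<dots> = integral {-h..0} (\<lambda>x. q1 (s + x))" by simp
    also have "\<dots> = integral {s-h..s} q1"
      using integral_shift_Icc_real[of "-h" 0 q1 s] by (simp add: o_def add.commute)
    finally show ?thesis .
  qed
  also have "integral {0..h} (\<lambda>t. 2 * q1 s) = 2" using hpos hq by simp
  finally have eqg: "(LBINT t=ereal 0..ereal h. g t) = integral {s..s+h} q1 - 2 + integral {s-h..s} q1" .
  have comb: "integral {s-h..s} q1 + integral {s..s+h} q1 = integral {s-h..s+h} q1"
    by (rule Henstock_Kurzweil_Integration.integral_combine) (use hpos i1 in auto)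
  have "integral {s-h..s+h} q1 \<ge> 2 - 1/4" using gb eqg comb by linarith
  hence "integral {s-h..s+h} q \<ge> 1" using split q2b by linarith
  thus ?thesis by (simp add: h_def)
qed


lemma ivl1:
  fixes q q1 :: "real \<Rightarrow> real"
  assumes qn: "\<forall>x. q x \<ge> 0" and qi: "\<And>a b. q integrable_on {a..b}"
    and q1_pos: "\<forall>x. q1 x > 0" and M: "M > 0"
    and win: "\<forall>s. R \<le> \<bar>s\<bar> \<longrightarrow> M \<le> q1 s \<and> 1 \<le> integral {s - 1/q1 s..s + 1/q1 s} q"
    and uv: "R \<le> u \<or> v \<le> -R" "2 / M \<le> v - u"
  shows "integral {u..v} q \<ge> 1"
proof -
  define c where "c = (u + v) / 2"
  have "0 < 2 / M" using M by simp
  hence uv': "u < v" using uv(2) by linarith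
  have "R \<le> c \<or> c \<le> -R" using uv(1) uv' unfolding c_def by auto
  hence cR: "R \<le> \<bar>c\<bar>" by auto
  have pos: "q1 c > 0" using q1_pos by auto
  have Mc: "M \<le> q1 c" and w1: "1 \<le> integral {c - 1/q1 c..c + 1/q1 c} q" using win cR by auto
  have "1 / q1 c \<le> 1 / M" using Mc M by (simp add: frac_le)
  also have "1 / M \<le> (v - u) / 2" using uv(2) M by (simp add: divide_simps)
  finally have hb: "1 / q1 c \<le> (v - u) / 2" .
  have "u \<le> c - 1/q1 c" using hb c_def by argo
  moreover have "c + 1/q1 c \<le> v" using hb c_def by argo
  ultimately have sub: "{c - 1/q1 c..c + 1/q1 c} \<subseteq> {u..v}" by auto
  have "integral {c - 1/q1 c..c + 1/q1 c} q \<le> integral {u..v} q"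
    by (rule integral_subset_le[OF sub qi qi]) (use qn in auto)
  thus ?thesis using w1 by linarith
qed

lemma chain:
  fixes q q1 :: "real \<Rightarrow> real"
  assumes qn: "\<forall>x. q x \<ge> 0" and qi: "\<And>a b. q integrable_on {a..b}"
    and q1_pos: "\<forall>x. q1 x > 0" and M: "M > 0"
    and win: "\<forall>s. R \<le> \<bar>s\<bar> \<longrightarrow> M \<le> q1 s \<and> 1 \<le> integral {s - 1/q1 s..s + 1/q1 s} q"
  shows "R \<le> u \<or> u + real k * (2 / M) \<le> -R \<Longrightarrow> integral {u..u + real k * (2/M)} q \<ge> real k"
proof (induction k)
  case 0
  then show ?case by simp
next
  case (Suc k)
  have l: "0 < 2 / M" using M by simp
  have "real k * (2/M) \<le> real (Suc k) * (2/M)" using l by (intro mult_right_mono) auto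
  hence "R \<le> u \<or> u + real k * (2 / M) \<le> -R" using Suc.prems by linarith
  hence ih: "integral {u..u + real k * (2/M)} q \<ge> real k"
    using Suc.IH by blast
  have eqB: "u + real (Suc k) * (2/M) = u + real k * (2/M) + 2/M" using M by (simp add: field_simps)
  have k0: "0 \<le> real k * (2/M)" using l by simp
  have c1: "R \<le> u + real k * (2/M) \<or> u + real (Suc k) * (2/M) \<le> -R" using Suc.prems k0 by linarith
  have c2: "2 / M \<le> u + real (Suc k) * (2/M) - (u + real k * (2/M))" using eqB by linarith
  have one: "integral {u + real k * (2/M)..u + real (Suc k) * (2/M)} q \<ge> 1"
    by (rule ivl1[OF qn qi q1_pos M win c1 c2])
  have "integral {u..u + real k * (2/M)} q + integral {u + real k * (2/M)..u + real (Suc k) * (2/M)} q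
      = integral {u..u + real (Suc k) * (2/M)} q"
    by (rule Henstock_Kurzweil_Integration.integral_combine) (insert k0 eqB l, linarith, linarith, rule qi)
  thus ?case using ih one by simp
qed

lemma lin:
  fixes q q1 :: "real \<Rightarrow> real"
  assumes qn: "\<forall>x. q x \<ge> 0" and qi: "\<And>a b. q integrable_on {a..b}"
    and q1_pos: "\<forall>x. q1 x > 0" and M: "M > 0"
    and win: "\<forall>s. R \<le> \<bar>s\<bar> \<longrightarrow> M \<le> q1 s \<and> 1 \<le> integral {s - 1/q1 s..s + 1/q1 s} q"
    and uv: "u \<le> v" "R \<le> u \<or> v \<le> -R"
  shows "integral {u..v} q \<ge> (M / 2) * (v - u) - 1"
proof -
  define k where "k = nat \<lfloor>(v - u) * (M / 2)\<rfloor>"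
  have n0: "0 \<le> (v - u) * (M / 2)" using uv M by simp
  have rk: "real k = of_int \<lfloor>(v - u) * (M / 2)\<rfloor>" unfolding k_def using n0 by simp
  have fl: "real k \<le> (v - u) * (M / 2)" "(v - u) * (M / 2) < real k + 1"
    unfolding rk by (rule of_int_floor_le, rule real_of_int_floor_add_one_gt)
  have kl: "real k * (2 / M) \<le> v - u" using fl(1) M by (simp add: field_simps)
  have "integral {u..u + real k * (2/M)} q \<ge> real k"
    by (rule chain[OF qn qi q1_pos M win]) (use uv kl in auto)
  moreover have "integral {u..u + real k * (2/M)} q \<le> integral {u..v} q"
    by (rule integral_subset_le) (use kl qi qn in auto)
  ultimately show ?thesis using fl by (simp add: algebra_simps)
qed

lemma QL:
  fixes q q1 :: "real \<Rightarrow> real"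
  assumes qn: "\<forall>x. q x \<ge> 0" and qi: "\<And>a b. q integrable_on {a..b}"
    and q1_pos: "\<forall>x. q1 x > 0" and K: "K > 0" and R: "R \<ge> 0"
    and win: "\<forall>s. R \<le> \<bar>s\<bar> \<longrightarrow> 4 * K \<le> q1 s \<and> 1 \<le> integral {s - 1/q1 s..s + 1/q1 s} q"
    and x: "3 * R + 1 / K + 1 \<le> \<bar>x\<bar>" and T: "x \<le> T"
  shows "integral {x..T} q \<ge> K * (T - x) - 1"
proof -
  have M: "4 * K > 0" using K by simp
  have L: "\<And>u v. u \<le> v \<Longrightarrow> R \<le> u \<or> v \<le> -R \<Longrightarrow> integral {u..v} q \<ge> 2 * (K * (v - u)) - 1"
  proof -
    fix u v assume "u \<le> v" "R \<le> u \<or> v \<le> -R"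
    from lin[OF qn qi q1_pos M win this] show "integral {u..v} q \<ge> 2 * (K * (v - u)) - 1" by simp
  qed
  have nn: "\<And>a b. 0 \<le> integral {a..b} q"
    using qn qi by (intro integral_nonneg) auto
  have comb: "\<And>a b c. a \<le> c \<Longrightarrow> c \<le> b \<Longrightarrow> integral {a..c} q + integral {c..b} q = integral {a..b} q"
    using qi Henstock_Kurzweil_Integration.integral_combine by blast
  have iK: "0 < 1 / K" using K by simp
  have K1: "K * (1 / K) = 1" using K by simp
  have KT: "0 \<le> K * (T - x)" using K T by simp
  show ?thesis
  proof (cases "x \<ge> 0")
    case True
    hence "R \<le> x" using x R iK by linarith
    hence "integral {x..T} q \<ge> 2 * (K * (T - x)) - 1" using L[OF T] by blast
    thus ?thesis using KT by linarith
  next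
    case False
    hence xR: "x \<le> - (3 * R + 1 / K + 1)" using x by argo
    hence xm: "x \<le> -R" using iK R by argo
    show ?thesis
    proof (cases "T \<le> -R")
      case True
      hence "integral {x..T} q \<ge> 2 * (K * (T - x)) - 1" using L[OF T] by blast
      thus ?thesis using KT by linarith
    next
      case TR: False
      have A: "integral {x..-R} q \<ge> 2 * (K * (-R - x)) - 1" using L[OF xm] by blast
      show ?thesis
      proof (cases "T \<le> R")
        case True
        have "integral {x..T} q = integral {x..-R} q + integral {-R..T} q"
          using comb[of x "-R" T] xm TR by linarith
        hence I: "integral {x..T} q \<ge> 2 * (K * (-R - x)) - 1" using A nn[of "-R" T] by linarith
        have "T - x \<le> 2 * (-R - x)" using True xR R iK by argo
        hence "K * (T - x) \<le> K * (2 * (-R - x))" using K by (intro mult_left_mono) auto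
        thus ?thesis using I by (simp add: algebra_simps)
      next
        case False
        have B: "integral {R..T} q \<ge> 2 * (K * (T - R)) - 1" using L[of R T] False by simp
        have "integral {-R..T} q = integral {-R..R} q + integral {R..T} q"
          using comb[of "-R" R T] False R by linarith
        moreover have "integral {x..T} q = integral {x..-R} q + integral {-R..T} q"
          using comb[of x "-R" T] xm TR by linarith
        ultimately have I: "integral {x..T} q \<ge> 2 * (K * (-R - x)) + 2 * (K * (T - R)) - 2"
          using A B nn[of "-R" R] by linarith
        have eq: "K * (-R - x) + K * (T - R) = K * (T - x) - 2 * (K * R)" by (simp add: algebra_simps)
        have "T - x \<ge> 4 * R + 1 / K" using False xR by argo
        hence "K * (T - x) \<ge> K * (4 * R + 1 / K)" using K by (intro mult_left_mono) auto
        hence "K * (T - x) \<ge> 4 * (K * R) + 1" using K1 by (simp add: algebra_simps)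
        thus ?thesis using I eq by linarith
      qed
    qed
  qed
qed


definition Bc :: "ereal \<Rightarrow> real \<Rightarrow> real" where
  "Bc p \<eta> = (if p = \<infinity> then 1 else (1 / \<eta>) powr (1 / (real_of_ereal p - 1)))"

lemma pointwise_young:
  fixes r \<eta> y :: real
  assumes r: "1 < r" and e: "0 < \<eta>" and y: "0 \<le> y"
  shows "y \<le> \<eta> * y powr r + (1 / \<eta>) powr (1 / (r - 1))"
proof -
  define B where "B = (1 / \<eta>) powr (1 / (r - 1))"
  have Bp: "B > 0" unfolding B_def using e by simp
  show ?thesis
  proof (cases "y \<le> B")
    case True
    have "0 \<le> \<eta> * y powr r" using e by simp
    thus ?thesis using True unfolding B_def by linarith
  next
    case False
    have r1: "0 < r - 1" using r by simp
    have "B powr (r - 1) = 1 / \<eta>" unfolding B_def using r1 e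
      by (simp add: powr_powr)
    moreover have "B powr (r - 1) < y powr (r - 1)"
      using powr_less_mono2[OF r1 _ ] Bp False by (simp add: less_imp_le)
    ultimately have "1 / \<eta> < y powr (r - 1)" by simp
    hence "1 < \<eta> * y powr (r - 1)" using e by (simp add: field_simps)
    hence "y < (\<eta> * y powr (r - 1)) * y" using False Bp by simp
    also have "(\<eta> * y powr (r - 1)) * y = \<eta> * y powr r"
    proof -
      have "y powr r = y powr ((r - 1) + 1)" by simp
      also have "\<dots> = y powr (r - 1) * y powr 1" by (rule powr_add)
      also have "y powr 1 = y" using y by simp
      finally show ?thesis by simp
    qed
    finally show ?thesis using Bp unfolding B_def by linarith
  qed
qed

lemma FB:
  fixes f :: "real \<Rightarrow> real" and p :: ereal
  assumes p: "1 < p" and f: "in_Lp p f" and n: "Lp_norm p f = 1" and e: "\<eta> > 0"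
  shows "set_integrable lborel {a..b} f \<and>
         (a \<le> b \<longrightarrow> integral {a..b} (\<lambda>t. \<bar>f t\<bar>) \<le> \<eta> + Bc p \<eta> * (b - a))"
proof (cases "p = \<infinity>")
  case True
  have fc: "continuous_on UNIV f" and fb: "bounded (range f)" using f True by (auto simp: in_Lp_def)
  have sup: "(SUP x. \<bar>f x\<bar>) = 1" using n True by (simp add: Lp_norm_def)
  have bdd: "bdd_above (range (\<lambda>x. \<bar>f x\<bar>))"
    using fb unfolding bounded_iff bdd_above_def by auto
  have le1: "\<And>x. \<bar>f x\<bar> \<le> 1" using cSUP_upper[OF _ bdd] sup by (metis UNIV_I)
  have si: "set_integrable lborel {a..b} f"
    using fc borel_integrable_atLeastAtMost' continuous_on_subset by blast
  have "a \<le> b \<longrightarrow> integral {a..b} (\<lambda>t. \<bar>f t\<bar>) \<le> \<eta> + Bc p \<eta> * (b - a)"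
  proof
    assume ab: "a \<le> b"
    have "integral {a..b} (\<lambda>t. \<bar>f t\<bar>) \<le> integral {a..b} (\<lambda>t. 1)"
      by (rule integral_le) (use si_hk[OF si] le1 in auto)
    also have "\<dots> = b - a" using ab by simp
    finally show "integral {a..b} (\<lambda>t. \<bar>f t\<bar>) \<le> \<eta> + Bc p \<eta> * (b - a)"
      using True e by (simp add: Bc_def)
  qed
  thus ?thesis using si by blast
next
  case False
  obtain r where pr: "p = ereal r" using p False by (cases p) auto
  have r: "1 < r" using p pr by simp
  have fm: "f \<in> borel_measurable lborel" and fi: "integrable lborel (\<lambda>x. \<bar>f x\<bar> powr r)"
    using f False pr by (auto simp: in_Lp_def)
  have In: "(LINT x|lborel. \<bar>f x\<bar> powr r) powr (1 / r) = 1" using n False pr by (simp add: Lp_norm_def)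
  have I1: "(LINT x|lborel. \<bar>f x\<bar> powr r) = 1"
  proof -
    define I where "I = (LINT x|lborel. \<bar>f x\<bar> powr r)"
    have I0: "I \<ge> 0" unfolding I_def by simp
    have "I powr (1 / r) = 1" using In I_def by simp
    hence "I \<noteq> 0" by auto
    hence "(I powr (1 / r)) powr r = I" using I0 r by (simp add: powr_powr)
    thus ?thesis using \<open>I powr (1 / r) = 1\<close> I_def by simp
  qed
  define B where "B = (1 / \<eta>) powr (1 / (r - 1))"
  have BB: "Bc p \<eta> = B" using False pr by (simp add: Bc_def B_def)
  have pw: "\<And>x. \<bar>f x\<bar> \<le> \<eta> * \<bar>f x\<bar> powr r + B"
    unfolding B_def by (rule pointwise_young[OF r e]) simp
  have g1: "set_integrable lborel {a..b} (\<lambda>x. \<bar>f x\<bar> powr r)"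
    unfolding set_integrable_def by (rule integrable_mult_indicator) (use fi in auto)
  have g2: "set_integrable lborel {a..b} (\<lambda>x. B)"
    by (rule borel_integrable_atLeastAtMost') (rule continuous_on_const)
  have g: "set_integrable lborel {a..b} (\<lambda>x. \<eta> * \<bar>f x\<bar> powr r + B)"
    using g1 g2 by auto
  have si: "set_integrable lborel {a..b} f"
  proof (rule set_integrable_bound[OF g])
    show "set_borel_measurable lborel {a..b} f" unfolding set_borel_measurable_def using fm by measurable
    show "AE x in lborel. x \<in> {a..b} \<longrightarrow> norm (f x) \<le> norm (\<eta> * \<bar>f x\<bar> powr r + B)"
    proof (rule AE_I2)
      fix x
      have nn: "0 \<le> \<eta> * \<bar>f x\<bar> powr r + B" using e unfolding B_def by simp
      show "x \<in> {a..b} \<longrightarrow> norm (f x) \<le> norm (\<eta> * \<bar>f x\<bar> powr r + B)"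
        using pw[of x] nn by simp
    qed
  qed
  have "a \<le> b \<longrightarrow> integral {a..b} (\<lambda>t. \<bar>f t\<bar>) \<le> \<eta> + Bc p \<eta> * (b - a)"
  proof
    assume ab: "a \<le> b"
    have "integral {a..b} (\<lambda>t. \<bar>f t\<bar>) \<le> integral {a..b} (\<lambda>x. \<eta> * \<bar>f x\<bar> powr r + B)"
      by (rule integral_le) (use si_hk[OF si] si_hk[OF g] pw in auto)
    also have "\<dots> = \<eta> * integral {a..b} (\<lambda>x. \<bar>f x\<bar> powr r) + B * (b - a)"
    proof -
      have "integral {a..b} (\<lambda>x. \<eta> * \<bar>f x\<bar> powr r + B) = integral {a..b} (\<lambda>x. \<eta> * \<bar>f x\<bar> powr r) + integral {a..b} (\<lambda>x. B)"
        by (rule integral_add) (use si_hk[OF g1] si_hk[OF g2] e in auto)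
      also have "integral {a..b} (\<lambda>x. \<eta> * \<bar>f x\<bar> powr r) = \<eta> * integral {a..b} (\<lambda>x. \<bar>f x\<bar> powr r)"
        using integral_mult[OF si_hk(1)[OF g1], of \<eta>] by simp
      finally show ?thesis using ab by simp
    qed
    also have "integral {a..b} (\<lambda>x. \<bar>f x\<bar> powr r) \<le> 1"
    proof -
      have "integral {a..b} (\<lambda>x. \<bar>f x\<bar> powr r) = (LINT x:{a..b}|lborel. \<bar>f x\<bar> powr r)"
        using si_hk(3)[OF g1] by simp
      also have "\<dots> \<le> (LINT x|lborel. \<bar>f x\<bar> powr r)"
        unfolding set_lebesgue_integral_def
        by (rule integral_mono) (use g1 fi in \<open>auto simp: set_integrable_def indicator_def\<close>)
      finally show ?thesis using I1 by simp
    qed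
    finally show "integral {a..b} (\<lambda>t. \<bar>f t\<bar>) \<le> \<eta> + Bc p \<eta> * (b - a)"
      using e BB by (simp add: mult_left_mono)
  qed
  thus ?thesis using si by blast
qed


lemma CONT:
  fixes z g :: "real \<Rightarrow> real"
  assumes sol: "\<And>a b. a \<le> b \<Longrightarrow> z b - z a = integral {a..b} g"
    and gi: "\<And>a b. g integrable_on {a..b}"
  shows "continuous_on UNIV z"
proof (rule continuous_at_imp_continuous_on, intro ballI)
  fix x :: real
  have eq: "z t = z (x-1) + integral {x-1..t} g" if t: "t \<in> {x-1..x+1}" for t
  proof -
    have "x - 1 \<le> t" using t by simp
    from sol[OF this] show ?thesis by linarith
  qed
  have "continuous_on {x-1..x+1} (\<lambda>t. z (x-1) + integral {x-1..t} g)"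
    by (rule continuous_on_add[OF continuous_on_const indefinite_integral_continuous_1[OF gi]])
  hence "continuous_on {x-1..x+1} z"
    by (rule continuous_on_eq) (metis eq)
  moreover have "x \<in> interior {x-1..x+1}" by simp
  ultimately show "isCont z x" using continuous_on_interior by blast
qed

lemma CORE:
  fixes q z h :: "real \<Rightarrow> real" and x \<epsilon> :: real
  assumes qn: "\<forall>x. q x \<ge> 0" and qi: "\<And>a b. q integrable_on {a..b}"
    and sol: "\<And>a b. a \<le> b \<Longrightarrow> z b - z a = integral {a..b} (\<lambda>t. q t * z t - h t)"
    and gi: "\<And>a b. (\<lambda>t. q t * z t - h t) integrable_on {a..b}"
    and hi: "\<And>a b. h integrable_on {a..b}" and hai: "\<And>a b. (\<lambda>t. \<bar>h t\<bar>) integrable_on {a..b}"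
    and hb: "\<And>T. x \<le> T \<Longrightarrow> integral {x..T} (\<lambda>t. \<bar>h t\<bar>) \<le> \<epsilon>/2 + (\<epsilon>/4) * integral {x..T} q"
    and e: "\<epsilon> > 0" and zx: "z x > \<epsilon>"
  shows "\<And>T. x \<le> T \<Longrightarrow> z T \<ge> \<epsilon>/2 + (\<epsilon>/4) * integral {x..T} q"
proof -
  have zc: "continuous_on UNIV z" by (rule CONT[OF sol gi])
  have Qn: "\<And>T. 0 \<le> integral {x..T} q" using qn qi by (intro integral_nonneg) auto
  have CE: "z T \<ge> z x - \<epsilon>/2 + (\<epsilon>/4) * integral {x..T} q"
    if T: "x \<le> T" and big: "\<forall>s\<in>{x..T}. z s \<ge> \<epsilon>/2" for T
  proof -
    have qzi: "(\<lambda>t. q t * z t) integrable_on {x..T}"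
      using integrable_add[OF gi hi] by simp
    have "z T - z x = integral {x..T} (\<lambda>t. q t * z t) - integral {x..T} h"
      using sol[OF T] integral_diff[OF qzi hi] by simp
    moreover have "integral {x..T} (\<lambda>t. (\<epsilon>/2) * q t) \<le> integral {x..T} (\<lambda>t. q t * z t)"
    proof (rule integral_le)
      show "(\<lambda>t. (\<epsilon>/2) * q t) integrable_on {x..T}" using qi e by simp
      show "qzi'": "(\<lambda>t. q t * z t) integrable_on {x..T}" by (rule qzi)
      fix t assume "t \<in> {x..T}"
      hence "\<epsilon>/2 \<le> z t" using big by auto
      moreover have "0 \<le> q t" using qn by auto
      ultimately have "q t * (\<epsilon>/2) \<le> q t * z t" by (rule mult_left_mono)
      thus "(\<epsilon>/2) * q t \<le> q t * z t" by (metis mult.commute)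
    qed
    moreover have "integral {x..T} (\<lambda>t. (\<epsilon>/2) * q t) = (\<epsilon>/2) * integral {x..T} q"
      using integral_mult[OF qi, of "\<epsilon>/2"] by simp
    moreover have "integral {x..T} h \<le> integral {x..T} (\<lambda>t. \<bar>h t\<bar>)"
      by (rule integral_le[OF hi hai]) simp
    ultimately have "z T - z x \<ge> (\<epsilon>/2) * integral {x..T} q - (\<epsilon>/2 + (\<epsilon>/4) * integral {x..T} q)"
      using hb[OF T] by linarith
    moreover have "(\<epsilon>/2) * integral {x..T} q = (\<epsilon>/4) * integral {x..T} q + (\<epsilon>/4) * integral {x..T} q"
      by simp
    ultimately show ?thesis by linarith
  qed
  have all: "z T > \<epsilon>/2" if T: "x \<le> T" for T
  proof (rule ccontr)
    assume "\<not> z T > \<epsilon>/2"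
    define S where "S = {s. x \<le> s} \<inter> {s. z s \<le> \<epsilon>/2}"
    have "T \<in> S" using T \<open>\<not> z T > \<epsilon>/2\<close> unfolding S_def by simp
    hence Sne: "S \<noteq> {}" by blast
    have Sbdd: "bdd_below S" unfolding S_def bdd_below_def by (rule exI[of _ x]) simp
    have Scl: "closed S" unfolding S_def
      by (intro closed_Int closed_Collect_le continuous_on_const continuous_on_id zc)
    define T0 where "T0 = Inf S"
    have T0S: "T0 \<in> S" unfolding T0_def by (rule closed_contains_Inf[OF Sne Sbdd Scl])
    hence T0x: "x \<le> T0" and zT0: "z T0 \<le> \<epsilon>/2" unfolding S_def by auto
    have below: "z s > \<epsilon>/2" if "x \<le> s" "s < T0" for s
    proof (rule ccontr)
      assume "\<not> z s > \<epsilon>/2"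
      hence "s \<in> S" using that unfolding S_def by auto
      hence "T0 \<le> s" unfolding T0_def using Sbdd by (rule cInf_lower)
      thus False using that by simp
    qed
    have "x \<noteq> T0"
    proof
      assume "x = T0"
      thus False using zT0 zx e by simp
    qed
    hence xT0: "x < T0" using T0x by simp
    have sub: "{x..<T0} \<subseteq> {s. z x - \<epsilon>/2 \<le> z s}"
    proof
      fix s assume s: "s \<in> {x..<T0}"
      have "\<forall>u\<in>{x..s}. z u \<ge> \<epsilon>/2"
      proof
        fix u assume u: "u \<in> {x..s}"
        have "x \<le> u" "u < T0" using u s by auto
        from below[OF this] show "z u \<ge> \<epsilon>/2" by simp
      qed
      moreover have "x \<le> s" using s by simp
      ultimately have "z s \<ge> z x - \<epsilon>/2 + (\<epsilon>/4) * integral {x..s} q" using CE by blast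
      moreover have "0 \<le> (\<epsilon>/4) * integral {x..s} q" using Qn e by simp
      ultimately have "z x - \<epsilon>/2 \<le> z s" by linarith
      thus "s \<in> {s. z x - \<epsilon>/2 \<le> z s}" by simp
    qed
    have "closed {s. z x - \<epsilon>/2 \<le> z s}"
      by (intro closed_Collect_le continuous_on_const zc)
    hence "closure {x..<T0} \<subseteq> {s. z x - \<epsilon>/2 \<le> z s}" using sub closure_minimal by blast
    moreover have "T0 \<in> closure {x..<T0}" using xT0 by simp
    ultimately have "z x - \<epsilon>/2 \<le> z T0" by blast
    thus False using zT0 zx by linarith
  qed
  fix T assume T: "x \<le> T"
  have "\<forall>s\<in>{x..T}. z s \<ge> \<epsilon>/2"
  proof
    fix s assume "s \<in> {x..T}"
    hence "x \<le> s" by simp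
    from all[OF this] show "z s \<ge> \<epsilon>/2" by simp
  qed
  from CE[OF T this] show "z T \<ge> \<epsilon>/2 + (\<epsilon>/4) * integral {x..T} q" using zx by linarith
qed


lemma PF:
  fixes w :: "real \<Rightarrow> real" and r c x :: real
  assumes r: "0 < r" and wi: "integrable lborel (\<lambda>t. \<bar>w t\<bar> powr r)"
    and c: "c > 0" and big: "\<And>T. x \<le> T \<Longrightarrow> c \<le> \<bar>w T\<bar>"
  shows False
proof -
  define I where "I = (LINT t|lborel. \<bar>w t\<bar> powr r)"
  define C where "C = c powr r"
  have Cp: "C > 0" unfolding C_def using c by simp
  have key: "real n * C \<le> I" for n :: nat
  proof -
    have g1: "set_integrable lborel {x..x + real n} (\<lambda>t. \<bar>w t\<bar> powr r)"
      unfolding set_integrable_def by (rule integrable_mult_indicator) (use wi in auto)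
    have "real n * C = integral {x..x + real n} (\<lambda>t. C)" by simp
    also have "\<dots> \<le> integral {x..x + real n} (\<lambda>t. \<bar>w t\<bar> powr r)"
    proof (rule integral_le)
      show "(\<lambda>t. C) integrable_on {x..x + real n}" by (rule integrable_continuous_interval) (rule continuous_on_const)
      show "(\<lambda>t. \<bar>w t\<bar> powr r) integrable_on {x..x + real n}" by (rule si_hk(1)[OF g1])
      fix t assume "t \<in> {x..x + real n}"
      hence "c \<le> \<bar>w t\<bar>" using big by auto
      thus "C \<le> \<bar>w t\<bar> powr r" unfolding C_def using c r by (intro powr_mono2) auto
    qed
    also have "\<dots> = (LINT t:{x..x + real n}|lborel. \<bar>w t\<bar> powr r)"
      using si_hk(3)[OF g1] by simp
    also have "\<dots> \<le> I"
      unfolding set_lebesgue_integral_def I_def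
      by (rule integral_mono) (use g1 wi in \<open>auto simp: set_integrable_def indicator_def\<close>)
    finally show ?thesis .
  qed
  obtain n :: nat where n: "I / C < real n" using reals_Archimedean2 by blast
  hence "I < real n * C" using Cp by (simp add: divide_less_eq)
  thus False using key[of n] by linarith
qed

lemma PI:
  fixes w Q :: "real \<Rightarrow> real" and x \<epsilon> K :: real
  assumes wb: "bounded (range w)" and K: "K > 0" and e: "\<epsilon> > 0"
    and big: "\<And>T. x \<le> T \<Longrightarrow> \<epsilon>/2 + (\<epsilon>/4) * Q T \<le> \<bar>w T\<bar>"
    and QL: "\<And>T. x \<le> T \<Longrightarrow> K * (T - x) - 1 \<le> Q T"
  shows False
proof -
  obtain Bd where Bd: "\<And>t. \<bar>w t\<bar> \<le> Bd"
    using wb unfolding bounded_iff by auto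
  have Bd0: "0 \<le> Bd" using Bd[of 0] by simp
  define T where "T = x + (4 * Bd / \<epsilon> + 2) / K"
  have pos: "0 \<le> (4 * Bd / \<epsilon> + 2) / K" using Bd0 e K by simp
  hence xT: "x \<le> T" unfolding T_def by simp
  have "K * (T - x) = 4 * Bd / \<epsilon> + 2" unfolding T_def using K by simp
  hence "4 * Bd / \<epsilon> + 1 \<le> Q T" using QL[OF xT] by linarith
  hence "(\<epsilon>/4) * (4 * Bd / \<epsilon> + 1) \<le> (\<epsilon>/4) * Q T" using e by (intro mult_left_mono) auto
  moreover have "(\<epsilon>/4) * (4 * Bd / \<epsilon> + 1) = Bd + \<epsilon>/4" using e by (simp add: field_simps)
  ultimately have "Bd + \<epsilon>/4 \<le> (\<epsilon>/4) * Q T" by simp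
  hence "Bd < \<bar>w T\<bar>" using big[OF xT] e by linarith
  thus False using Bd[of T] by simp
qed


theorem corollary5p2:
  fixes q q1 q2 :: "real \<Rightarrow> real" and p :: ereal
  assumes q_nonneg: "\<forall>x. q x \<ge> 0"
    and q_loc: "loc_int q"
    and q_inf: "\<exists>a>0. (INF x. (LBINT t:{x-a..x+a}. q t)) > 0"
    and q1_pos: "\<forall>x. q1 x > 0"
    and q1_cont: "continuous_on UNIV q1"
    and q2_loc: "loc_int q2"
    and q_split: "AE x in lborel. q x = q1 x + q2 x"
    and sigma1_lim: "(sigma1 q1 \<longlongrightarrow> 0) at_infinity"
    and sigma2_lim: "(sigma2 q1 q2 \<longlongrightarrow> 0) at_infinity"
    and q1_inf: "filterlim q1 at_top at_infinity"
    and p_gt: "1 < p"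
  shows "tend_in_whole_to_zero p q"
  unfolding tend_in_whole_to_zero_def
proof (intro allI impI)
  fix \<epsilon> :: real assume e: "\<epsilon> > 0"
  have qi: "\<And>a b. q integrable_on {a..b}" using q_loc si_hk(1) unfolding loc_int_def by metis
  define \<eta> where "\<eta> = \<epsilon> / 4"
  have eta: "\<eta> > 0" using e unfolding \<eta>_def by simp
  define B where "B = Bc p \<eta>"
  have Bp: "B > 0" unfolding B_def Bc_def using eta by simp
  define K where "K = 4 * B / \<epsilon>"
  have Kp: "K > 0" unfolding K_def using Bp e by simp
  have KB: "(\<epsilon>/4) * K = B" unfolding K_def using e by simp
  have ev1: "eventually (\<lambda>s. 4 * K \<le> q1 s) at_infinity"
    using q1_inf unfolding filterlim_at_top by blast
  have ev2: "eventually (\<lambda>s. dist (sigma1 q1 s) 0 < 1/4) at_infinity"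
    using tendstoD[OF sigma1_lim, of "1/4"] by simp
  have ev3: "eventually (\<lambda>s. dist (sigma2 q1 q2 s) 0 < 1/4) at_infinity"
    using tendstoD[OF sigma2_lim, of "1/4"] by simp
  have "eventually (\<lambda>s. 4 * K \<le> q1 s \<and> dist (sigma1 q1 s) 0 < 1/4 \<and> dist (sigma2 q1 q2 s) 0 < 1/4) at_infinity"
    using ev1 ev2 ev3 by (intro eventually_conj)
  then obtain R0 where R0: "\<And>s. R0 \<le> norm s \<Longrightarrow> 4 * K \<le> q1 s \<and> dist (sigma1 q1 s) 0 < 1/4 \<and> dist (sigma2 q1 q2 s) 0 < 1/4"
    unfolding eventually_at_infinity by blast
  define R where "R = max R0 0"
  have R: "R \<ge> 0" unfolding R_def by simp
  have win: "\<forall>s. R \<le> \<bar>s\<bar> \<longrightarrow> 4 * K \<le> q1 s \<and> 1 \<le> integral {s - 1/q1 s..s + 1/q1 s} q"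
  proof (intro allI impI)
    fix s :: real assume "R \<le> \<bar>s\<bar>"
    hence "R0 \<le> norm s" unfolding R_def by simp
    note Rs = R0[OF this]
    have "\<bar>sigma1 q1 s\<bar> < 1/4" "\<bar>sigma2 q1 q2 s\<bar> < 1/4" using Rs by (simp_all add: dist_real_def)
    hence s1: "sigma1 q1 s \<le> 1/4" and s2: "sigma2 q1 q2 s \<le> 1/4" by auto
    show "4 * K \<le> q1 s \<and> 1 \<le> integral {s - 1/q1 s..s + 1/q1 s} q"
      using Rs window[OF q1_pos q1_cont q2_loc q_loc q_split s1 s2] by simp
  qed
  show "\<exists>x0. \<forall>y\<in>D_set p q. \<forall>x. x0 \<le> \<bar>x\<bar> \<longrightarrow> \<bar>y x\<bar> \<le> \<epsilon>"
  proof (intro exI[of _ "3 * R + 1 / K + 1"] ballI allI impI)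
    fix y x assume yD: "y \<in> D_set p q" and x: "3 * R + 1 / K + 1 \<le> \<bar>x\<bar>"
    obtain f where yLp: "in_Lp p y" and fLp: "in_Lp p f" and fn: "Lp_norm p f = 1" and ys: "is_solution q f y"
      using yD unfolding D_set_def by blast
    define g where "g = (\<lambda>t. q t * y t - f t)"
    have gl: "loc_int g" and gs: "\<And>a b. a \<le> b \<Longrightarrow> y b - y a = (LBINT t:{a..b}. g t)"
      using ys unfolding is_solution_def g_def by auto
    have gi: "\<And>a b. g integrable_on {a..b}" using gl si_hk(1) unfolding loc_int_def by metis
    have solH: "\<And>a b. a \<le> b \<Longrightarrow> y b - y a = integral {a..b} g"
    proof -
      fix a b :: real assume ab: "a \<le> b"
      have "set_integrable lborel {a..b} g" using gl unfolding loc_int_def by blast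
      thus "y b - y a = integral {a..b} g" using gs[OF ab] si_hk(3) by metis
    qed
    have fsi: "\<And>a b. set_integrable lborel {a..b} f" using FB[OF p_gt fLp fn eta] by blast
    have fi: "\<And>a b. f integrable_on {a..b}" using si_hk(1)[OF fsi] .
    have fai: "\<And>a b. (\<lambda>t. \<bar>f t\<bar>) integrable_on {a..b}" using si_hk(2)[OF fsi] .
    have QLx: "\<And>T. x \<le> T \<Longrightarrow> K * (T - x) - 1 \<le> integral {x..T} q"
      using QL[OF q_nonneg qi q1_pos Kp R win x] by blast
    have Qn: "\<And>T. 0 \<le> integral {x..T} q" using q_nonneg qi by (intro integral_nonneg) auto
    have hb: "integral {x..T} (\<lambda>t. \<bar>f t\<bar>) \<le> \<epsilon>/2 + (\<epsilon>/4) * integral {x..T} q" if T: "x \<le> T" for T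
    proof -
      have h1: "integral {x..T} (\<lambda>t. \<bar>f t\<bar>) \<le> \<eta> + B * (T - x)"
        using FB[OF p_gt fLp fn eta, of x T] T unfolding B_def by blast
      have "K * (T - x) \<le> integral {x..T} q + 1" using QLx[OF T] by linarith
      hence "(\<epsilon>/4) * (K * (T - x)) \<le> (\<epsilon>/4) * (integral {x..T} q + 1)"
        using e by (intro mult_left_mono) auto
      moreover have "(\<epsilon>/4) * (K * (T - x)) = B * (T - x)" using KB by (simp add: mult.assoc[symmetric])
      moreover have "(\<epsilon>/4) * (integral {x..T} q + 1) = (\<epsilon>/4) * integral {x..T} q + \<epsilon>/4"
        by (simp add: distrib_left)
      ultimately have "B * (T - x) \<le> (\<epsilon>/4) * integral {x..T} q + \<epsilon>/4" by linarith
      thus ?thesis using h1 unfolding \<eta>_def by linarith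
    qed
    have big: "\<forall>T. x \<le> T \<longrightarrow> \<epsilon>/2 + (\<epsilon>/4) * integral {x..T} q \<le> \<bar>y T\<bar>"
      if nle: "\<not> \<bar>y x\<bar> \<le> \<epsilon>"
    proof (cases "y x > \<epsilon>")
      case True
      have "\<And>T. x \<le> T \<Longrightarrow> \<epsilon>/2 + (\<epsilon>/4) * integral {x..T} q \<le> y T"
        by (rule CORE[OF q_nonneg qi solH[unfolded g_def] gi[unfolded g_def] fi fai hb e True])
      thus ?thesis by (meson abs_ge_self order_trans)
    next
      case False
      hence yneg: "- y x > \<epsilon>" using nle by linarith
      have eqf: "(\<lambda>t. q t * (- y t) - (- f t)) = (\<lambda>t. - g t)" unfolding g_def by (simp add: fun_eq_iff)
      have sol': "\<And>a b. a \<le> b \<Longrightarrow> (- y b) - (- y a) = integral {a..b} (\<lambda>t. q t * (- y t) - (- f t))"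
        unfolding eqf
      proof -
        fix a b :: real assume ab: "a \<le> b"
        have "y b - y a = integral {a..b} g" by (rule solH[OF ab])
        thus "(- y b) - (- y a) = integral {a..b} (\<lambda>t. - g t)" by simp
      qed
      have gi': "\<And>a b. (\<lambda>t. q t * (- y t) - (- f t)) integrable_on {a..b}"
        unfolding eqf using gi by (simp add: integrable_neg)
      have fi': "\<And>a b. (\<lambda>t. - f t) integrable_on {a..b}" using fi by (simp add: integrable_neg)
      have fai': "\<And>a b. (\<lambda>t. \<bar>- f t\<bar>) integrable_on {a..b}" using fai by simp
      have hb': "\<And>T. x \<le> T \<Longrightarrow> integral {x..T} (\<lambda>t. \<bar>- f t\<bar>) \<le> \<epsilon>/2 + (\<epsilon>/4) * integral {x..T} q"
        using hb by simp
      have "\<And>T. x \<le> T \<Longrightarrow> \<epsilon>/2 + (\<epsilon>/4) * integral {x..T} q \<le> - y T"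
        by (rule CORE[where z="\<lambda>t. - y t" and h="\<lambda>t. - f t", OF q_nonneg qi sol' gi' fi' fai' hb' e yneg])
      thus ?thesis by (meson abs_ge_minus_self order_trans)
    qed
    show "\<bar>y x\<bar> \<le> \<epsilon>"
    proof (rule ccontr)
      assume nle: "\<not> \<bar>y x\<bar> \<le> \<epsilon>"
      note bg = big[OF nle]
      show False
      proof (cases "p = \<infinity>")
        case True
        have "bounded (range y)" using yLp True unfolding in_Lp_def by simp
        thus False
          by (rule PI[where Q="\<lambda>T. integral {x..T} q", OF _ Kp e _ QLx]) (use bg in auto)
      next
        case False
        obtain r where pr: "p = ereal r" using p_gt False by (cases p) auto
        have r: "0 < r" using p_gt pr by simp
        have yi: "integrable lborel (\<lambda>t. \<bar>y t\<bar> powr r)" using yLp False pr unfolding in_Lp_def by simp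
        have c: "\<epsilon>/2 > 0" using e by simp
        show False
        proof (rule PF[OF r yi c])
          fix T assume T: "x \<le> T"
          have "0 \<le> (\<epsilon>/4) * integral {x..T} q" using Qn e by simp
          thus "\<epsilon>/2 \<le> \<bar>y T\<bar>" using bg T by force
        qed
      qed
    qed
  qed
qed

end
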